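(* Let $f:\mathbb{R}\to\mathbb{R}$ be given by $f(t):=\sum_{n=1}^\infty\frac1n\sin^2(t/2^n)$. Then $f$ is not quasi-asymptotically almost periodic; that is, it is false that for every $\epsilon>0$ there is $l>0$ such that every interval of length $l$ contains a number $\tau$ for which there exists $M(\epsilon,\tau)>0$ with $|f(t+\tau)-f(t)|\le\epsilon$ for all $|t|\ge M(\epsilon,\tau)$.
   Context: Known facts (may be used): $f$ is well defined, uniformly continuous, unbounded, and for each $\tau\in\mathbb{R}$ the function $t\mapsto f(t+\tau)-f(t)$ is (Bohr) almost periodic. *)

theory Defs
  imports "HOL-Analysis.Analysis"
begin

definition fex :: "real \<Rightarrow> real" where
  "fex t = (\<Sum>n. (1 / real (Suc n)) * (sin (t / 2 ^ Suc n))\<^sup>2)"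

definition quasi_asymptotically_almost_periodic :: "(real \<Rightarrow> real) \<Rightarrow> bool" where
  "quasi_asymptotically_almost_periodic g \<longleftrightarrow>
     (\<forall>\<epsilon>>0. \<exists>l>0. \<forall>a. \<exists>\<tau>\<in>{a..a+l}. \<exists>M>0.
        \<forall>t. \<bar>t\<bar> \<ge> M \<longrightarrow> \<bar>g (t + \<tau>) - g t\<bar> \<le> \<epsilon>)"

end

theory Submission imports Defs "HOL-Analysis.Harmonic_Numbers" begin

lemma sin2_shift: "sin (x + real k * pi)^2 = sin x ^ 2"
  by (simp add: sin_add power_mult_distrib flip: power_mult)

lemma sin2_big: assumes "pi/4 \<le> x" "x \<le> 3*pi/4" shows "sin x ^ 2 \<ge> 1/2"
proof -
  have "cos (2*x - pi) \<ge> 0" using assms by (intro cos_ge_zero) auto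
  hence "cos (2*x) \<le> 0" by (simp add: cos_diff)
  thus ?thesis by (simp add: cos_double_sin)
qed

lemma mod3: "(2::nat)^j mod 3 = 1 \<or> (2::nat)^j mod 3 = 2"
proof (induction j)
  case (Suc j)
  have "(2::nat)^Suc j mod 3 = (2 * (2^j mod 3)) mod 3" by (simp add: mod_mult_right_eq)
  with Suc show ?case by auto
qed simp

lemma sq4: "((x::real) / 2 ^ Suc n)^2 = x^2 * (1/4)^Suc n"
proof -
  have h: "((2::real)^Suc n)^2 = 4^Suc n" by (simp add: power2_eq_square flip: power_mult_distrib)
  have "(x / 2^Suc n)^2 = x^2 / 4^Suc n" by (simp only: power_divide h)
  also have "\<dots> = x^2 * (1/4)^Suc n" by (simp add: power_one_over)
  finally show ?thesis .
qed

lemma term_summable: "summable (\<lambda>n. (1 / real (Suc n)) * (sin (t / 2 ^ Suc n))\<^sup>2)"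
proof (rule summable_comparison_test)
  show "summable (\<lambda>n. t^2 * (1/4)^Suc n)" by simp
  show "\<exists>N. \<forall>n\<ge>N. norm ((1 / real (Suc n)) * (sin (t / 2 ^ Suc n))\<^sup>2) \<le> t^2 * (1/4)^Suc n"
  proof (intro exI allI impI)
    fix n :: nat
    have "(sin (t / 2 ^ Suc n))\<^sup>2 \<le> (t / 2 ^ Suc n)^2"
      using abs_sin_x_le_abs_x[of "t / 2 ^ Suc n"]
      by (metis abs_ge_zero power2_abs power_mono)
    also have "\<dots> = t^2 * (1/4)^Suc n"
      by (rule sq4)
    finally have a: "(sin (t / 2 ^ Suc n))\<^sup>2 \<le> t^2 * (1/4)^Suc n" .
    have "(1 / real (Suc n)) * (sin (t / 2 ^ Suc n))\<^sup>2 \<le> 1 * (sin (t / 2 ^ Suc n))\<^sup>2"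
      by (intro mult_right_mono) auto
    with a have b: "(1 / real (Suc n)) * (sin (t / 2 ^ Suc n))\<^sup>2 \<le> t^2 * (1/4)^Suc n"
      by linarith
    have nn: "0 \<le> (1 / real (Suc n)) * (sin (t / 2 ^ Suc n))\<^sup>2" by simp
    show "norm ((1 / real (Suc n)) * (sin (t / 2 ^ Suc n))\<^sup>2) \<le> t^2 * (1/4)^Suc n"
      using b by (simp only: real_norm_def abs_of_nonneg[OF nn])
  qed
qed

lemma upper: "fex (2^N * pi) \<le> 6"
proof -
  let ?g = "\<lambda>n. (1 / real (Suc n)) * (sin (2^N * pi / 2 ^ Suc n))\<^sup>2"
  have sg: "summable ?g" by (rule term_summable)
  have z: "?g i = 0" if "i < N" for i
  proof -
    have NN: "N = (N - Suc i) + Suc i" using that by simp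
    have "(2::real)^N = 2^(N - Suc i) * 2^Suc i" by (subst NN) (simp only: power_add)
    then have "2^N * pi / 2 ^ Suc i = real (2^(N - Suc i)) * pi" by simp
    then have "sin (2^N * pi / 2 ^ Suc i) = 0" by (simp only: sin_npi)
    thus ?thesis by simp
  qed
  have sh: "?g (n + N) \<le> 16 * (1/4)^Suc n" for n
  proof -
    have e: "2^N * pi / 2 ^ Suc (n + N) = pi / 2^Suc n"
      by (simp add: power_add)
    have "(sin (pi / 2 ^ Suc n))\<^sup>2 \<le> (pi / 2 ^ Suc n)^2"
      using abs_sin_x_le_abs_x[of "pi / 2 ^ Suc n"]
      by (metis abs_ge_zero power2_abs power_mono)
    also have "\<dots> = pi^2 * (1/4)^Suc n"
      by (rule sq4)
    also have "\<dots> \<le> 16 * (1/4)^Suc n"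
    proof -
      have "pi^2 \<le> 4^2" using pi_less_4 pi_gt_zero by (intro power_mono) auto
      thus ?thesis by (intro mult_right_mono) auto
    qed
    finally have a: "(sin (pi / 2 ^ Suc n))\<^sup>2 \<le> 16 * (1/4)^Suc n" .
    have "?g (n+N) \<le> 1 * (sin (pi / 2 ^ Suc n))\<^sup>2"
      unfolding e by (intro mult_right_mono) auto
    with a show ?thesis by simp
  qed
  have "fex (2^N * pi) = (\<Sum>n. ?g (n + N)) + (\<Sum>i<N. ?g i)"
    unfolding fex_def by (rule suminf_split_initial_segment[OF sg])
  also have "(\<Sum>i<N. ?g i) = 0" using z by simp
  also have "(\<Sum>n. ?g (n + N)) \<le> (\<Sum>n. 16 * (1/4::real)^Suc n)"
  proof (rule suminf_le)
    show "summable (\<lambda>n. ?g (n + N))" by (rule summable_ignore_initial_segment[OF sg])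
    show "summable (\<lambda>n. 16 * (1/4::real)^Suc n)" by (rule summable_mult) simp
  qed (rule sh)
  also have "(\<Sum>n. 16 * (1/4::real)^Suc n) = 16/3"
  proof -
    have "(\<Sum>n. 16 * (1/4::real)^Suc n) = (16/4) * (\<Sum>n. (1/4::real)^n)"
      by (subst suminf_mult[symmetric]) (auto simp: mult_ac)
    also have "\<dots> = 16/3" by (subst suminf_geometric) auto
    finally show ?thesis .
  qed
  finally show ?thesis by simp
qed

lemma key:
  assumes "m \<le> n" "n < K" "K \<le> N" "0 < l" "8*l < 2^m"
    "2^K*pi/3 \<le> \<tau>" "\<tau> \<le> 2^K*pi/3 + l"
  shows "sin ((2^N*pi + \<tau>) / 2^Suc n)^2 \<ge> 1/2"
proof -
  define j where "j = K - Suc n"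
  define r where "r = (2::nat)^j mod 3"
  define q where "q = (2::nat)^j div 3"
  have jq: "(2::nat)^j = 3*q + r" unfolding q_def r_def by simp
  have r12: "r = 1 \<or> r = 2" unfolding r_def by (rule mod3)
  define e where "e = (\<tau> - 2^K*pi/3) / 2^Suc n"
  have e0: "0 \<le> e" unfolding e_def using assms by simp
  have "(2::real)^m \<le> 2^Suc n" using assms by (intro power_increasing) auto
  hence "l / 2^Suc n \<le> l / 2^m" using assms by (intro divide_left_mono) auto
  also have "\<dots> < 1/8" using assms by (simp add: field_simps)
  finally have "l / 2^Suc n < 1/8" .
  moreover have "e \<le> l / 2^Suc n" unfolding e_def using assms by (intro divide_right_mono) auto
  ultimately have e8: "e < 1/8" by linarith
  have KK: "K = j + Suc n" unfolding j_def using assms by simp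
  have NN: "N = (N - Suc n) + Suc n" using assms by simp
  have A: "(2::real)^K / 2^Suc n = 2^j" unfolding KK by (simp add: power_add)
  have B: "(2::real)^N / 2^Suc n = 2^(N - Suc n)" by (subst NN) (simp add: power_add)
  have "(2^N*pi + \<tau>) / 2^Suc n = 2^N / 2^Suc n * pi + 2^K / 2^Suc n * pi / 3 + e"
    unfolding e_def by (simp add: field_simps)
  also have "\<dots> = 2^(N - Suc n) * pi + 2^j * pi / 3 + e" unfolding A B ..
  also have "(2::real)^j = 3 * real q + real r"
    by (metis jq of_nat_add of_nat_mult of_nat_numeral of_nat_power)
  also have "2^(N - Suc n) * pi + (3 * real q + real r) * pi / 3 + e
     = (real r * pi / 3 + e) + real (2^(N - Suc n) + q) * pi"
    by (simp add: field_simps)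
  finally have eq: "sin ((2^N*pi + \<tau>) / 2^Suc n)^2 = sin (real r * pi / 3 + e)^2"
    by (simp only: sin2_shift)
  have "pi/4 \<le> real r * pi / 3 + e" "real r * pi / 3 + e \<le> 3*pi/4"
    using r12 e0 e8 pi_gt3 by auto
  hence "sin (real r * pi / 3 + e)^2 \<ge> 1/2" by (rule sin2_big)
  thus ?thesis using eq by simp
qed

theorem mainTheorem5:
  shows "\<not> quasi_asymptotically_almost_periodic fex"
proof
  assume "quasi_asymptotically_almost_periodic fex"
  then obtain l where l: "l > 0" and H: "\<forall>a. \<exists>\<tau>\<in>{a..a+l}. \<exists>M>0.
        \<forall>t. \<bar>t\<bar> \<ge> M \<longrightarrow> \<bar>fex (t + \<tau>) - fex t\<bar> \<le> 1"
    unfolding quasi_asymptotically_almost_periodic_def by (meson zero_less_one)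
  obtain m :: nat where m: "8*l < 2^m" using real_arch_pow[of 2 "8*l"] by auto
  have "eventually (\<lambda>K. harm K \<ge> 16 + (harm m::real)) sequentially"
    using harm_at_top by (simp add: filterlim_at_top)
  moreover have "eventually (\<lambda>K. K \<ge> m) sequentially" by (rule eventually_ge_at_top)
  ultimately have "eventually (\<lambda>K. K \<ge> m \<and> harm K \<ge> 16 + (harm m::real)) sequentially"
    by (rule eventually_conj[rotated])
  then obtain K where mK: "m \<le> K" and hK: "harm K \<ge> 16 + (harm m::real)"
    by (auto simp: eventually_sequentially)
  define a where "a = 2^K*pi/3"
  obtain \<tau> M where \<tau>: "\<tau> \<in> {a..a+l}" and M: "M > 0"
    and HM: "\<forall>t. \<bar>t\<bar> \<ge> M \<longrightarrow> \<bar>fex (t + \<tau>) - fex t\<bar> \<le> 1"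
    using H by blast
  obtain N' :: nat where N': "M < 2^N'" using real_arch_pow[of 2 M] by auto
  define N where "N = max K N'"
  define t :: real where "t = 2^N * pi"
  have "(2::real)^N' \<le> 2^N" unfolding N_def by (intro power_increasing) auto
  also have "\<dots> \<le> 2^N * pi" using pi_gt3 by simp
  finally have tM: "\<bar>t\<bar> \<ge> M" using N' unfolding t_def by simp
  have KN: "K \<le> N" unfolding N_def by simp
  let ?g = "\<lambda>n. (1 / real (Suc n)) * (sin ((t + \<tau>) / 2 ^ Suc n))\<^sup>2"
  have F1: "(\<Sum>n\<in>{m..<K}. ?g n) \<le> fex (t + \<tau>)"
    unfolding fex_def by (rule sum_le_suminf[OF term_summable]) auto
  have F2: "(\<Sum>n\<in>{m..<K}. inverse (real (Suc n)) / 2) \<le> (\<Sum>n\<in>{m..<K}. ?g n)"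
  proof (rule sum_mono)
    fix n assume n: "n \<in> {m..<K}"
    have "sin ((t + \<tau>) / 2^Suc n)^2 \<ge> 1/2"
      unfolding t_def using n KN l m \<tau> unfolding a_def by (intro key[of m n K N l]) auto
    hence "(1 / real (Suc n)) * (1/2) \<le> ?g n" by (intro mult_left_mono) auto
    thus "inverse (real (Suc n)) / 2 \<le> ?g n" by (simp add: field_simps)
  qed
  have F3: "(\<Sum>n\<in>{m..<K}. inverse (real (Suc n)) / 2) = (harm K - harm m :: real) / 2"
  proof -
    have "(harm K - harm m :: real) = (\<Sum>n\<in>{m..<K}. inverse (real (Suc n)))"
      unfolding harm_altdef lessThan_atLeast0 using mK by (intro sum_diff_nat_ivl) auto
    thus ?thesis by (simp add: sum_divide_distrib)
  qed
  have "8 \<le> (harm K - harm m :: real) / 2" using hK by simp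
  also have "\<dots> \<le> fex (t + \<tau>)" using F1 F2 unfolding F3 by (rule order_trans[rotated])
  finally have lo: "fex (t + \<tau>) \<ge> 8" .
  have up: "fex t \<le> 6" unfolding t_def by (rule upper)
  have "\<bar>fex (t + \<tau>) - fex t\<bar> \<le> 1" using HM tM by blast
  with lo up show False by linarith
qed

end
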